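(* Let $X=\{x_1<\dots<x_r\} \subseteq Z=\{z_1<\dots<z_m\}$ be two sets of positive integers. For an integer $y$, let \[ \nu(y) = \#\{z\in Z\mid z\geq y\} + \#\{x\in X\mid x\leq y\}, \] and for a set $Y$, $\nu(Y) = \sum_{y\in Y} \nu(y)$. For $r\leq s\leq m$, let \[ \Sigma_s(X,Z) = \sum_{X\subseteq Y\subseteq Z,\ |Y|=s} q^{\nu(Y)}. \] Then \[ \Sigma_s(X,Z) = q^{\nu(X) + (r+1)(s-r)+\binom{s-r}{2}} \left[\begin{matrix} m-r\\ s-r\end{matrix}\right]_q . \]
   Context: $\left[\begin{matrix} a\\ b\end{matrix}\right]_q$ denotes the Gaussian $q$-binomial coefficient. *)

theory Defs
  imports Main
begin

fun qbinom :: "'a::comm_ring_1 \<Rightarrow> nat \<Rightarrow> nat \<Rightarrow> 'a" where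
  "qbinom q n 0 = 1"
| "qbinom q 0 (Suc k) = 0"
| "qbinom q (Suc n) (Suc k) = qbinom q n k + q ^ (Suc k) * qbinom q n (Suc k)"

definition nu :: "nat set \<Rightarrow> nat set \<Rightarrow> nat \<Rightarrow> nat" where
  "nu X Z y = card {z \<in> Z. z \<ge> y} + card {x \<in> X. x \<le> y}"

definition nuSet :: "nat set \<Rightarrow> nat set \<Rightarrow> nat set \<Rightarrow> nat" where
  "nuSet X Z Y = (\<Sum>y\<in>Y. nu X Z y)"

definition Sigma_s :: "'a::comm_ring_1 \<Rightarrow> nat \<Rightarrow> nat set \<Rightarrow> nat set \<Rightarrow> 'a" where
  "Sigma_s q s X Z = (\<Sum>Y \<in> {Y. X \<subseteq> Y \<and> Y \<subseteq> Z \<and> card Y = s}. q ^ nuSet X Z Y)"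

end

theory Submission
  imports Defs
begin

definition cW :: "nat set \<Rightarrow> nat \<Rightarrow> nat" where
  "cW W w = card {w'\<in>W. w \<le> w'}"

definition GW :: "'a::comm_ring_1 \<Rightarrow> nat set \<Rightarrow> nat \<Rightarrow> 'a" where
  "GW q W k = (\<Sum>S\<in>{S. S \<subseteq> W \<and> card S = k}. q ^ (\<Sum>w\<in>S. cW W w))"

lemma choose2_Suc: "Suc (Suc j) choose 2 = (Suc j choose 2) + Suc j"
  by (simp add: numeral_2_eq_2)

lemma subsets0: "finite W \<Longrightarrow> {S. S \<subseteq> W \<and> card S = 0} = {{}}"
  using finite_subset by fastforce

lemma split_sets:
  assumes "finite A" "b \<notin> A"
  shows "{S. S \<subseteq> insert b A \<and> card S = Suc j}
       = {S. S \<subseteq> A \<and> card S = Suc j} \<union> insert b ` {S. S \<subseteq> A \<and> card S = j}"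
proof (intro equalityI subsetI)
  fix S assume "S \<in> {S. S \<subseteq> insert b A \<and> card S = Suc j}"
  hence S: "S \<subseteq> insert b A" "card S = Suc j" by auto
  have fS: "finite S" using S(1) assms(1) finite_subset by blast
  show "S \<in> {S. S \<subseteq> A \<and> card S = Suc j} \<union> insert b ` {S. S \<subseteq> A \<and> card S = j}"
  proof (cases "b \<in> S")
    case True
    hence "S = insert b (S - {b})" by auto
    moreover have "S - {b} \<subseteq> A" using S by auto
    moreover have "card (S - {b}) = j" using S True fS by simp
    ultimately show ?thesis by blast
  next
    case False
    thus ?thesis using S by auto
  qed
next
  fix S assume "S \<in> {S. S \<subseteq> A \<and> card S = Suc j} \<union> insert b ` {S. S \<subseteq> A \<and> card S = j}"
  thus "S \<in> {S. S \<subseteq> insert b A \<and> card S = Suc j}"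
  proof
    assume "S \<in> {S. S \<subseteq> A \<and> card S = Suc j}" thus ?thesis by auto
  next
    assume "S \<in> insert b ` {S. S \<subseteq> A \<and> card S = j}"
    then obtain T where T: "T \<subseteq> A" "card T = j" "S = insert b T" by auto
    have "finite T" using T(1) assms(1) finite_subset by blast
    moreover have "b \<notin> T" using T(1) assms(2) by auto
    ultimately show ?thesis using T by auto
  qed
qed

lemma GW_eq:
  assumes "finite W"
  shows "GW q W k = q ^ (Suc k choose 2) * qbinom q (card W) k"
  using assms
proof (induction W arbitrary: k rule: finite_linorder_max_induct)
  case empty
  show ?case
  proof (cases k)
    case 0
    have "{S. S = ({}::nat set) \<and> card S = 0} = {{}}" by auto
    thus ?thesis using 0 by (simp add: GW_def numeral_2_eq_2)
  next
    case (Suc j)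
    have e: "{S. S = ({}::nat set) \<and> card S = Suc j} = {}" by auto
    show ?thesis using Suc by (simp add: GW_def e del: Collect_empty_eq)
  qed
next
  case (insert b A)
  have bA: "b \<notin> A" using insert by auto
  have fA: "finite A" by fact
  have cb: "cW (insert b A) b = 1"
  proof -
    have "{w'\<in>insert b A. b \<le> w'} = {b}" using insert.hyps(2) by force
    thus ?thesis by (simp add: cW_def)
  qed
  have ca: "cW (insert b A) a = Suc (cW A a)" if "a \<in> A" for a
  proof -
    have "{w'\<in>insert b A. a \<le> w'} = insert b {w'\<in>A. a \<le> w'}"
      using insert.hyps(2) that by force
    thus ?thesis using bA fA by (simp add: cW_def)
  qed
  have sumA: "(\<Sum>w\<in>S. cW (insert b A) w) = (\<Sum>w\<in>S. cW A w) + card S" if "S \<subseteq> A" for S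
  proof -
    have "(\<Sum>w\<in>S. cW (insert b A) w) = (\<Sum>w\<in>S. Suc (cW A w))"
      using that ca by (intro sum.cong) auto
    moreover have "(\<Sum>w\<in>S. Suc (cW A w)) = (\<Sum>w\<in>S. cW A w) + card S"
      by (simp only: Suc_eq_plus1 sum.distrib card_eq_sum)
    ultimately show ?thesis by simp
  qed
  show ?case
  proof (cases k)
    case 0
    have "finite (insert b A)" using fA by simp
    thus ?thesis using 0 by (simp add: GW_def subsets0 numeral_2_eq_2)
  next
    case (Suc j)
    let ?P = "{S. S \<subseteq> A \<and> card S = Suc j}"
    let ?Q = "{S. S \<subseteq> A \<and> card S = j}"
    have fP: "finite ?P" using fA by simp
    have fQ: "finite ?Q" using fA by simp
    have disj: "?P \<inter> insert b ` ?Q = {}" using bA by auto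
    have inj: "inj_on (insert b) ?Q"
      by (rule inj_onI) (metis bA Diff_insert_absorb in_mono mem_Collect_eq)
    have s1: "(\<Sum>S\<in>?P. q ^ (\<Sum>w\<in>S. cW (insert b A) w)) = q ^ Suc j * GW q A (Suc j)"
      unfolding GW_def sum_distrib_left
    proof (intro sum.cong refl)
      fix S assume "S \<in> ?P"
      hence "(\<Sum>w\<in>S. cW (insert b A) w) = Suc j + (\<Sum>w\<in>S. cW A w)" using sumA by auto
      thus "q ^ (\<Sum>w\<in>S. cW (insert b A) w) = q ^ Suc j * q ^ (\<Sum>w\<in>S. cW A w)"
        by (simp only: power_add)
    qed
    have s2: "(\<Sum>S\<in>insert b ` ?Q. q ^ (\<Sum>w\<in>S. cW (insert b A) w)) = q ^ Suc j * GW q A j"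
    proof -
      have "(\<Sum>S\<in>insert b ` ?Q. q ^ (\<Sum>w\<in>S. cW (insert b A) w))
          = (\<Sum>S\<in>?Q. q ^ (\<Sum>w\<in>insert b S. cW (insert b A) w))"
        using inj by (simp add: sum.reindex)
      also have "\<dots> = (\<Sum>S\<in>?Q. q ^ Suc j * q ^ (\<Sum>w\<in>S. cW A w))"
      proof (intro sum.cong refl)
        fix S assume S: "S \<in> ?Q"
        have fS: "finite S" using S fA finite_subset by blast
        have "b \<notin> S" using S bA by auto
        hence "(\<Sum>w\<in>insert b S. cW (insert b A) w) = 1 + (\<Sum>w\<in>S. cW (insert b A) w)"
          using fS cb by simp
        also have "\<dots> = Suc j + (\<Sum>w\<in>S. cW A w)" using S sumA by auto
        finally show "q ^ (\<Sum>w\<in>insert b S. cW (insert b A) w) = q ^ Suc j * q ^ (\<Sum>w\<in>S. cW A w)"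
          by (simp add: power_add)
      qed
      finally show ?thesis by (simp add: GW_def sum_distrib_left)
    qed
    have "GW q (insert b A) k = (\<Sum>S\<in>?P \<union> insert b ` ?Q. q ^ (\<Sum>w\<in>S. cW (insert b A) w))"
      unfolding GW_def Suc split_sets[OF fA bA] ..
    also have "\<dots> = (\<Sum>S\<in>?P. q ^ (\<Sum>w\<in>S. cW (insert b A) w))
        + (\<Sum>S\<in>insert b ` ?Q. q ^ (\<Sum>w\<in>S. cW (insert b A) w))"
      by (rule sum.union_disjoint[OF fP finite_imageI[OF fQ] disj])
    also have "\<dots> = q ^ Suc j * GW q A (Suc j) + q ^ Suc j * GW q A j"
      unfolding s1 s2 ..
    also have "\<dots> = q ^ Suc j * (q ^ (Suc (Suc j) choose 2) * qbinom q (card A) (Suc j))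
                    + q ^ Suc j * (q ^ (Suc j choose 2) * qbinom q (card A) j)"
      using insert.IH by simp
    also have "\<dots> = q ^ (Suc k choose 2) * qbinom q (card (insert b A)) k"
    proof -
      have "card (insert b A) = Suc (card A)" using fA bA by simp
      moreover have "q ^ (Suc (Suc j) choose 2) = q ^ (Suc j choose 2) * q ^ Suc j"
        by (simp only: choose2_Suc power_add)
      ultimately show ?thesis using Suc by (simp add: distrib_left mult_ac)
    qed
    finally show ?thesis .
  qed
qed

theorem mainTheorem15:
  fixes q :: "'a::comm_ring_1" and X Z :: "nat set" and r m s :: nat
  assumes "finite Z" and "0 \<notin> Z" and "X \<subseteq> Z"
    and "r = card X" and "m = card Z"
    and "r \<le> s" and "s \<le> m"
  shows "Sigma_s q s X Z
         = q ^ (nuSet X Z X + (r + 1) * (s - r) + ((s - r) choose 2)) * qbinom q (m - r) (s - r)"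
proof -
  define W where "W = Z - X"
  define k where "k = s - r"
  have fX: "finite X" using assms(1,3) finite_subset by blast
  have fW: "finite W" using assms(1) W_def by simp
  have cardW: "card W = m - r" using assms fX by (simp add: W_def card_Diff_subset)
  have nuw: "nu X Z w = r + cW W w" if "w \<in> W" for w
  proof -
    have wX: "w \<notin> X" using that W_def by auto
    have e1: "{z \<in> Z. z \<ge> w} = {z\<in>W. w \<le> z} \<union> {x\<in>X. x \<ge> w}" using assms(3) W_def by auto
    have c1: "card {z \<in> Z. z \<ge> w} = cW W w + card {x\<in>X. x \<ge> w}"
      unfolding e1 cW_def using fW fX W_def by (subst card_Un_disjoint) auto
    have e2: "X = {x\<in>X. x \<ge> w} \<union> {x\<in>X. x \<le> w}" by auto
    have "card X = card {x\<in>X. x \<ge> w} + card {x\<in>X. x \<le> w}"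
      using fX wX by (subst e2, subst card_Un_disjoint) (auto simp: antisym)
    thus ?thesis using c1 assms(4) unfolding nu_def by simp
  qed
  have img: "{Y. X \<subseteq> Y \<and> Y \<subseteq> Z \<and> card Y = s} = (\<lambda>S. X \<union> S) ` {S. S \<subseteq> W \<and> card S = k}"
  proof (intro equalityI subsetI)
    fix Y assume "Y \<in> {Y. X \<subseteq> Y \<and> Y \<subseteq> Z \<and> card Y = s}"
    hence Y: "X \<subseteq> Y" "Y \<subseteq> Z" "card Y = s" by auto
    have fY: "finite Y" using Y(2) assms(1) finite_subset by blast
    have "Y = X \<union> (Y - X)" using Y by auto
    moreover have "Y - X \<subseteq> W" using Y W_def by auto
    moreover have "card (Y - X) = k" using Y fY fX assms(4) k_def by (simp add: card_Diff_subset)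
    ultimately show "Y \<in> (\<lambda>S. X \<union> S) ` {S. S \<subseteq> W \<and> card S = k}" by blast
  next
    fix Y assume "Y \<in> (\<lambda>S. X \<union> S) ` {S. S \<subseteq> W \<and> card S = k}"
    then obtain S where S: "S \<subseteq> W" "card S = k" "Y = X \<union> S" by auto
    have fS: "finite S" using S fW finite_subset by blast
    have "X \<inter> S = {}" using S W_def by auto
    hence "card Y = r + k" using S fS fX assms(4) card_Un_disjoint by metis
    thus "Y \<in> {Y. X \<subseteq> Y \<and> Y \<subseteq> Z \<and> card Y = s}" using S assms W_def k_def by auto
  qed
  have inj: "inj_on (\<lambda>S. X \<union> S) {S. S \<subseteq> W \<and> card S = k}"
    by (rule inj_onI) (auto simp: W_def)
  have "Sigma_s q s X Z = (\<Sum>S\<in>{S. S \<subseteq> W \<and> card S = k}. q ^ nuSet X Z (X \<union> S))"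
    unfolding Sigma_s_def img using inj by (simp add: sum.reindex)
  also have "\<dots> = (\<Sum>S\<in>{S. S \<subseteq> W \<and> card S = k}. q ^ (nuSet X Z X + r * k) * q ^ (\<Sum>w\<in>S. cW W w))"
  proof (intro sum.cong refl)
    fix S assume S: "S \<in> {S. S \<subseteq> W \<and> card S = k}"
    have fS: "finite S" using S fW finite_subset by blast
    have "nuSet X Z (X \<union> S) = nuSet X Z X + (\<Sum>w\<in>S. nu X Z w)"
      unfolding nuSet_def using fS fX S W_def by (subst sum.union_disjoint) auto
    also have "(\<Sum>w\<in>S. nu X Z w) = (\<Sum>w\<in>S. r + cW W w)"
      using S nuw by (intro sum.cong) auto
    also have "\<dots> = r * k + (\<Sum>w\<in>S. cW W w)" using S by (simp add: sum.distrib)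
    finally show "q ^ nuSet X Z (X \<union> S) = q ^ (nuSet X Z X + r * k) * q ^ (\<Sum>w\<in>S. cW W w)"
      by (simp add: power_add add.assoc)
  qed
  also have "\<dots> = q ^ (nuSet X Z X + r * k) * GW q W k"
    by (simp add: GW_def sum_distrib_left)
  also have "\<dots> = q ^ (nuSet X Z X + r * k) * q ^ (Suc k choose 2) * qbinom q (m - r) k"
    unfolding GW_eq[OF fW] cardW by (simp add: mult.assoc)
  also have "\<dots> = q ^ (nuSet X Z X + (r + 1) * k + (k choose 2)) * qbinom q (m - r) k"
  proof -
    have "Suc k choose 2 = k + (k choose 2)"
      by (simp add: numeral_2_eq_2)
    hence "nuSet X Z X + (r + 1) * k + (k choose 2) = (nuSet X Z X + r * k) + (Suc k choose 2)"
      by simp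
    thus ?thesis by (simp only: power_add mult.assoc)
  qed
  finally show ?thesis unfolding k_def .
qed

end
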